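(* Let $G$ be a connected graph with $|V(G)|\geq 3$. The following are equivalent: (a) $G$ is a complete graph; (b) $\chi(\mathcal{R}(G))=2$; (c) $\mathcal{R}(G)$ contains no cycle of length $5$.
   Context: For a connected graph $G$, a search tree on $G$ is a rooted tree with vertex set $V(G)$ defined recursively: its root is some vertex $r\in V(G)$, and the children of $r$ are the roots of search trees on the connected components of $G-r$. For a rooted tree $T$ and $w\in V(T)$, $T|w$ denotes the subtree rooted at $w$. Let $T$ be a search tree on $G$, let $v$ be a child of $u$ in $T$, and let $p$ be the parent of $u$ (if it exists). The $uv$-rotation transforms $T$ into the search tree $T'$ in which: $u$ is a child of $v$ and $v$ is a child of $p$ (or $v$ is the root if $u$ was the root); every subtree of $u$ in $T$ other than $T|v$ is a subtree of $u$ in $T'$; and every subtree $S$ of $v$ in $T$ is a subtree of $u$ in $T'$ if $u$ is adjacent in $G$ to some vertex of $S$, and a subtree of $v$ in $T'$ otherwise. The rotation graph $\mathcal{R}(G)$ is the graph whose vertices are the search trees on $G$, two being adjacent iff they differ by one rotation. $\chi$ denotes chromatic number. *)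

theory Defs
  imports Main
begin

definition simple_graph :: "'a set \<Rightarrow> ('a \<Rightarrow> 'a \<Rightarrow> bool) \<Rightarrow> bool" where
  "simple_graph V E \<longleftrightarrow> finite V \<and> (\<forall>x y. E x y \<longrightarrow> x \<in> V \<and> y \<in> V)
     \<and> (\<forall>x y. E x y \<longrightarrow> E y x) \<and> (\<forall>x. \<not> E x x)"

definition rel_in :: "('a \<Rightarrow> 'a \<Rightarrow> bool) \<Rightarrow> 'a set \<Rightarrow> ('a \<times> 'a) set" where
  "rel_in E S = {(x, y). x \<in> S \<and> y \<in> S \<and> E x y}"

definition connected_in :: "('a \<Rightarrow> 'a \<Rightarrow> bool) \<Rightarrow> 'a set \<Rightarrow> bool" where
  "connected_in E S \<longleftrightarrow> S \<noteq> {} \<and> (\<forall>x\<in>S. \<forall>y\<in>S. (x, y) \<in> (rel_in E S)\<^sup>*)"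

definition comps :: "('a \<Rightarrow> 'a \<Rightarrow> bool) \<Rightarrow> 'a set \<Rightarrow> 'a set set" where
  "comps E S = (\<lambda>x. {y \<in> S. (x, y) \<in> (rel_in E S)\<^sup>*}) ` S"

definition complete_graph :: "'a set \<Rightarrow> ('a \<Rightarrow> 'a \<Rightarrow> bool) \<Rightarrow> bool" where
  "complete_graph V E \<longleftrightarrow> (\<forall>x\<in>V. \<forall>y\<in>V. x \<noteq> y \<longrightarrow> E x y)"

text \<open>Rooted trees are represented by parent functions p: p x = Some y means y is the parent
  of x; the root (and every non-vertex) has p x = None.
  st E S q p: p restricted to S describes a search tree on G[S] whose root has parent q.\<close>

inductive st :: "('a \<Rightarrow> 'a \<Rightarrow> bool) \<Rightarrow> 'a set \<Rightarrow> 'a option \<Rightarrow> ('a \<Rightarrow> 'a option) \<Rightarrow> bool"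
  for E where
  node: "r \<in> S \<Longrightarrow> p r = q \<Longrightarrow> (\<forall>C\<in>comps E (S - {r}). st E C (Some r) p) \<Longrightarrow> st E S q p"

definition search_tree :: "'a set \<Rightarrow> ('a \<Rightarrow> 'a \<Rightarrow> bool) \<Rightarrow> ('a \<Rightarrow> 'a option) \<Rightarrow> bool" where
  "search_tree V E p \<longleftrightarrow> st E V None p \<and> (\<forall>x. x \<notin> V \<longrightarrow> p x = None)"

definition subtree :: "('a \<Rightarrow> 'a option) \<Rightarrow> 'a \<Rightarrow> 'a set" where
  "subtree p w = {x. (x, w) \<in> {(a, b). p a = Some b}\<^sup>*}"

definition rotate :: "('a \<Rightarrow> 'a \<Rightarrow> bool) \<Rightarrow> ('a \<Rightarrow> 'a option) \<Rightarrow> 'a \<Rightarrow> 'a \<Rightarrow> ('a \<Rightarrow> 'a option)" where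
  "rotate E p u v = (\<lambda>x.
     if x = u then Some v
     else if x = v then p u
     else if p x = Some v then (if \<exists>y\<in>subtree p x. E u y then Some u else Some v)
     else p x)"

definition rotation_step :: "('a \<Rightarrow> 'a \<Rightarrow> bool) \<Rightarrow> ('a \<Rightarrow> 'a option) \<Rightarrow> ('a \<Rightarrow> 'a option) \<Rightarrow> bool" where
  "rotation_step E p p' \<longleftrightarrow> (\<exists>u v. p v = Some u \<and> p' = rotate E p u v)"

definition rot_vertices :: "'a set \<Rightarrow> ('a \<Rightarrow> 'a \<Rightarrow> bool) \<Rightarrow> ('a \<Rightarrow> 'a option) set" where
  "rot_vertices V E = {p. search_tree V E p}"

definition rot_adj :: "('a \<Rightarrow> 'a \<Rightarrow> bool) \<Rightarrow> ('a \<Rightarrow> 'a option) \<Rightarrow> ('a \<Rightarrow> 'a option) \<Rightarrow> bool" where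
  "rot_adj E p p' \<longleftrightarrow> p \<noteq> p' \<and> (rotation_step E p p' \<or> rotation_step E p' p)"

definition chromatic_number :: "'b set \<Rightarrow> ('b \<Rightarrow> 'b \<Rightarrow> bool) \<Rightarrow> nat" where
  "chromatic_number X R = (LEAST k. \<exists>c :: 'b \<Rightarrow> nat.
      (\<forall>x\<in>X. c x < k) \<and> (\<forall>x\<in>X. \<forall>y\<in>X. R x y \<longrightarrow> c x \<noteq> c y))"

definition has_cycle :: "'b set \<Rightarrow> ('b \<Rightarrow> 'b \<Rightarrow> bool) \<Rightarrow> nat \<Rightarrow> bool" where
  "has_cycle X R k \<longleftrightarrow> (\<exists>xs. length xs = k \<and> distinct xs \<and> set xs \<subseteq> X
      \<and> (\<forall>i<k. R (xs ! i) (xs ! ((i + 1) mod k))))"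

end

theory Submission
  imports Defs
begin

lemma comps_sub: "C \<in> comps E S \<Longrightarrow> C \<subseteq> S"
  unfolding comps_def by auto

lemma comps_connected: "connected_in E S \<Longrightarrow> comps E S = {S}"
  unfolding comps_def connected_in_def by auto

lemma comps_empty: "comps E {} = {}"
  unfolding comps_def by auto

lemma comps_mem: "a \<in> S \<Longrightarrow> \<exists>C\<in>comps E S. a \<in> C"
  unfolding comps_def by auto

lemma st_cong: "st E S q p \<Longrightarrow> (\<forall>a\<in>S. p a = p' a) \<Longrightarrow> st E S q p'"
proof (induction rule: st.induct)
  case (node r S p q)
  show ?case
  proof (rule st.node[of r])
    show "r \<in> S" by fact
    show "p' r = q" using node by auto
    show "\<forall>C\<in>comps E (S - {r}). st E C (Some r) p'"
    proof
      fix C assume C: "C \<in> comps E (S - {r})"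
      have "C \<subseteq> S" using comps_sub[OF C] by auto
      then show "st E C (Some r) p'" using node(3) node(4) C by blast
    qed
  qed
qed

lemma st_vals: "st E S q p \<Longrightarrow> \<forall>a\<in>S. p a = q \<or> (\<exists>b\<in>S. p a = Some b)"
proof (induction rule: st.induct)
  case (node r S p q)
  show ?case
  proof
    fix a assume a: "a \<in> S"
    show "p a = q \<or> (\<exists>b\<in>S. p a = Some b)"
    proof (cases "a = r")
      case True then show ?thesis using node by auto
    next
      case False
      then obtain C where C: "C \<in> comps E (S - {r})" "a \<in> C" using a comps_mem[of a "S - {r}" E] by blast
      have CS: "C \<subseteq> S" using comps_sub[OF C(1)] by auto
      from node(3) C have "p a = Some r \<or> (\<exists>b\<in>C. p a = Some b)" by blast
      then show ?thesis using CS node(1) by blast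
    qed
  qed
qed

lemma subtree_leaf: "(\<forall>a. p a \<noteq> Some x) \<Longrightarrow> subtree p x = {x}"
proof -
  assume h: "\<forall>a. p a \<noteq> Some x"
  have "a = x" if "(a, x) \<in> {(a, b). p a = Some b}\<^sup>*" for a
    using that by (rule rtranclE) (use h in auto)
  then show ?thesis unfolding subtree_def by auto
qed
lemma rotate_upd:
  assumes "p w = None" "w \<noteq> u" "w \<noteq> v" "q \<noteq> Some v"
    "\<forall>w0. q = Some w0 \<longrightarrow> p w0 = None \<and> w0 \<noteq> w"
  shows "rotate E (p(w:=q)) u v = (rotate E p u v)(w:=q)"
proof -
  have sub: "subtree (p(w:=q)) a = subtree p a" if "p a = Some v" for a
  proof -
    let ?R = "{(a, b). p a = Some b}" and ?R' = "{(a, b). (p(w:=q)) a = Some b}"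
    have aw: "a \<noteq> w" using that assms by auto
    have "?R \<subseteq> ?R'" using assms by auto
    then have 1: "subtree p a \<subseteq> subtree (p(w:=q)) a" unfolding subtree_def
      using rtrancl_mono by blast
    have "(c, a) \<in> ?R\<^sup>*" if "(c, a) \<in> ?R'\<^sup>*" for c
      using that
    proof (induction rule: converse_rtrancl_induct)
      case base then show ?case by simp
    next
      case (step c d)
      show ?case
      proof (cases "c = w")
        case False
        then have "(c, d) \<in> ?R" using step by auto
        then show ?thesis using step by (meson converse_rtrancl_into_rtrancl)
      next
        case True
        then have "q = Some d" using step by auto
        then have "p d = None" "d \<noteq> w" using assms by auto
        moreover have "d \<noteq> a" using \<open>p d = None\<close> \<open>p a = Some v\<close> by auto
        moreover have "(d, a) \<in> ?R\<^sup>*" using step by blast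
        ultimately have False by (rule_tac converse_rtranclE) auto
        then show ?thesis ..
      qed
    qed
    then show ?thesis using 1 unfolding subtree_def by auto
  qed
  show ?thesis
  proof
    fix a
    show "rotate E (p(w:=q)) u v a = ((rotate E p u v)(w:=q)) a"
      unfolding rotate_def using assms sub by (cases "a = w") simp_all
  qed
qed


definition rstep :: "('a \<Rightarrow> 'a \<Rightarrow> bool) \<Rightarrow> 'a set \<Rightarrow> ('a \<Rightarrow> 'a option) \<Rightarrow> ('a \<Rightarrow> 'a option) \<Rightarrow> bool" where
  "rstep E T p p' \<longleftrightarrow> (\<exists>u\<in>T. \<exists>v\<in>T. p v = Some u \<and> p' = rotate E p u v)"

definition good5 where
  "good5 E S q T ps \<longleftrightarrow> length ps = 5 \<and> distinct ps \<and>
     (\<forall>p\<in>set ps. st E S q p \<and> (\<forall>a. a \<notin> S \<longrightarrow> p a = None)) \<and>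
     (\<forall>i<5. rstep E T (ps!i) (ps!((i+1) mod 5)))"

lemma st_single: "p r = q \<Longrightarrow> st E {r} q p"
  by (rule st.node[of r]) (auto simp: comps_empty)

lemma conn_single: "connected_in E {a}"
  unfolding connected_in_def by auto

lemma conn_two: "E a b \<Longrightarrow> E b a \<Longrightarrow> connected_in E {a, b}"
  unfolding connected_in_def rel_in_def by (auto intro: r_into_rtrancl)

lemma st_chain2:
  assumes "a \<noteq> b" "p a = q" "p b = Some a"
  shows "st E {a, b} q p"
proof (rule st.node[of a])
  have "{a, b} - {a} = {b}" using assms by auto
  then show "\<forall>C\<in>comps E ({a, b} - {a}). st E C (Some a) p"
    using comps_connected[OF conn_single[of E b]] st_single[of p b "Some a" E] assms by auto
qed (use assms in auto)

lemma st_chain3: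
  assumes "E b c" "E c b" "a \<noteq> b" "a \<noteq> c" "b \<noteq> c" "p a = q" "p b = Some a" "p c = Some b"
  shows "st E {a, b, c} q p"
proof (rule st.node[of a])
  have "{a, b, c} - {a} = {b, c}" using assms by auto
  then show "\<forall>C\<in>comps E ({a, b, c} - {a}). st E C (Some a) p"
    using comps_connected[OF conn_two[of E b c, OF assms(1,2)]] st_chain2[of b c p "Some a"] assms by auto
qed (use assms in auto)

lemma st_star:
  assumes "\<not> E x z" "\<not> E z x" "\<not> E x x" "\<not> E z z" "x \<noteq> y" "x \<noteq> z" "y \<noteq> z"
    "p y = q" "p x = Some y" "p z = Some y"
  shows "st E {x, y, z} q p"
proof (rule st.node[of y])
  have 1: "{x, y, z} - {y} = {x, z}" using assms by auto
  have "rel_in E {x, z} = {}" using assms unfolding rel_in_def by auto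
  then have "comps E {x, z} = {{x}, {z}}" unfolding comps_def using assms by auto
  then have "comps E ({x, y, z} - {y}) = {{x}, {z}}" using 1 by simp
  then show "\<forall>C\<in>comps E ({x, y, z} - {y}). st E C (Some y) p"
    using st_single[of p x "Some y" E] st_single[of p z "Some y" E] assms(9,10) by simp
qed (use assms in auto)




lemma pent_base:
  assumes sym: "\<forall>a b. E a b \<longrightarrow> E b a" and irr: "\<forall>a. \<not> E a a"
    and xy: "E x y" and yz: "E y z" and xz: "\<not> E x z" and xnz: "x \<noteq> z"
    and q: "q \<noteq> Some x" "q \<noteq> Some y" "q \<noteq> Some z"
  shows "\<exists>ps. good5 E {x, y, z} q {x, y, z} ps"
proof -
  have yx: "E y x" and zy: "E z y" and zx: "\<not> E z x" using sym xy yz xz by blast+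
  have xny: "x \<noteq> y" and ynz: "y \<noteq> z" using irr xy yz by metis+
  define T1 where "T1 = (\<lambda>_. None)(y := q, x := Some y, z := Some y)"
  define T2 where "T2 = (\<lambda>_. None)(x := q, y := Some x, z := Some y)"
  define T3 where "T3 = (\<lambda>_. None)(x := q, z := Some x, y := Some z)"
  define T4 where "T4 = (\<lambda>_. None)(z := q, x := Some z, y := Some x)"
  define T5 where "T5 = (\<lambda>_. None)(z := q, y := Some z, x := Some y)"
  note defs = T1_def T2_def T3_def T4_def T5_def
  have d: "T1 x \<noteq> T2 x" "T1 x \<noteq> T3 x" "T1 x \<noteq> T4 x" "T1 y \<noteq> T5 y"
     "T2 y \<noteq> T3 y" "T2 x \<noteq> T4 x" "T2 x \<noteq> T5 x" "T3 x \<noteq> T4 x" "T3 x \<noteq> T5 x" "T4 x \<noteq> T5 x"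
    using xny xnz ynz q unfolding defs by auto
  have dist: "distinct [T1, T2, T3, T4, T5]"
    using d by auto
  have s1: "st E {x, y, z} q T1"
    by (rule st_star) (use xz zx irr xny xnz ynz in \<open>auto simp: T1_def\<close>)
  have s2: "st E {x, y, z} q T2"
    by (rule st_chain3) (use yz zy xny xnz ynz in \<open>auto simp: T2_def\<close>)
  have s3': "st E {x, z, y} q T3"
    by (rule st_chain3) (use yz zy xny xnz ynz in \<open>auto simp: T3_def\<close>)
  have s4': "st E {z, x, y} q T4"
    by (rule st_chain3) (use xy yx xny xnz ynz in \<open>auto simp: T4_def\<close>)
  have s5': "st E {z, y, x} q T5"
    by (rule st_chain3) (use xy yx xny xnz ynz in \<open>auto simp: T5_def\<close>)
  have "{x, z, y} = {x, y, z}" "{z, x, y} = {x, y, z}" "{z, y, x} = {x, y, z}" by auto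
  then have s3: "st E {x, y, z} q T3" and s4: "st E {x, y, z} q T4" and s5: "st E {x, y, z} q T5"
    using s3' s4' s5' by simp_all
  have out: "\<forall>a. a \<notin> {x, y, z} \<longrightarrow> T a = None" if "T \<in> {T1, T2, T3, T4, T5}" for T
    using that unfolding defs by auto
  have sub3: "subtree T3 y = {y}"
    by (rule subtree_leaf) (use xny xnz ynz q in \<open>auto simp: T3_def\<close>)
  have sub5: "subtree T5 x = {x}"
    by (rule subtree_leaf) (use xny xnz ynz q in \<open>auto simp: T5_def\<close>)
  have r1: "rotate E T1 y x = T2"
    unfolding rotate_def using xny xnz ynz q by (auto simp: defs)
  have r2: "rotate E T2 y z = T3"
    unfolding rotate_def using xny xnz ynz q by (auto simp: defs)
  have r3: "rotate E T3 x z = T4"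
  proof -
    have ex: "\<exists>b\<in>subtree T3 y. E x b" using sub3 xy by simp
    show ?thesis
    proof (rule ext)
      fix a show "rotate E T3 x z a = T4 a"
        using xny xnz ynz q ex unfolding rotate_def by (cases "a = y") (simp_all add: T3_def T4_def)
    qed
  qed
  have r4: "rotate E T4 x y = T5"
    unfolding rotate_def using xny xnz ynz q by (auto simp: defs)
  have r5: "rotate E T5 z y = T1"
  proof -
    have ex: "\<not> (\<exists>b\<in>subtree T5 x. E z b)" using sub5 zx by simp
    show ?thesis
    proof (rule ext)
      fix a show "rotate E T5 z y a = T1 a"
        using xny xnz ynz q ex unfolding rotate_def by (cases "a = x") (simp_all add: T5_def T1_def)
    qed
  qed
  have st: "rstep E {x, y, z} T1 T2" "rstep E {x, y, z} T2 T3" "rstep E {x, y, z} T3 T4"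
    "rstep E {x, y, z} T4 T5" "rstep E {x, y, z} T5 T1"
    unfolding rstep_def using r1 r2 r3 r4 r5 xny xnz ynz by (auto simp: defs)
  have "good5 E {x, y, z} q {x, y, z} [T1, T2, T3, T4, T5]"
    unfolding good5_def
  proof (intro conjI)
    show "\<forall>i<5. rstep E {x, y, z} ([T1, T2, T3, T4, T5] ! i) ([T1, T2, T3, T4, T5] ! ((i + 1) mod 5))"
    proof (intro allI impI)
      fix i :: nat assume "i < 5"
      then have "i = 0 \<or> i = 1 \<or> i = 2 \<or> i = 3 \<or> i = 4" by auto
      then show "rstep E {x, y, z} ([T1, T2, T3, T4, T5] ! i) ([T1, T2, T3, T4, T5] ! ((i + 1) mod 5))"
        using st by auto
    qed
  qed (use dist s1 s2 s3 s4 s5 out in auto)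
  then show ?thesis by blast
qed




lemma edge_out: "(a, b) \<in> R\<^sup>* \<Longrightarrow> a \<in> T \<Longrightarrow> b \<notin> T \<Longrightarrow> \<exists>c d. (c, d) \<in> R \<and> c \<in> T \<and> d \<notin> T"
proof (induction rule: rtrancl_induct)
  case base then show ?case by simp
next
  case (step b c)
  then show ?case by (cases "b \<in> T") auto
qed

lemma rel_in_mono: "S \<subseteq> S' \<Longrightarrow> rel_in E S \<subseteq> rel_in E S'"
  unfolding rel_in_def by auto

lemma conn_insert:
  assumes "connected_in E T" "c \<in> T" "E c d" "E d c"
  shows "connected_in E (insert d T)"
proof -
  let ?R = "rel_in E T" and ?R' = "rel_in E (insert d T)"
  have m: "?R\<^sup>* \<subseteq> ?R'\<^sup>*" using rel_in_mono[of T "insert d T" E] rtrancl_mono by blast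
  have cd: "(c, d) \<in> ?R'\<^sup>*" "(d, c) \<in> ?R'\<^sup>*" using assms unfolding rel_in_def by auto
  have T: "(a, b) \<in> ?R'\<^sup>*" if "a \<in> T" "b \<in> T" for a b
    using assms(1) that m unfolding connected_in_def by blast
  show ?thesis unfolding connected_in_def
  proof (intro conjI ballI)
    fix a b assume a: "a \<in> insert d T" and b: "b \<in> insert d T"
    show "(a, b) \<in> ?R'\<^sup>*"
    proof (cases "a = d")
      case True
      show ?thesis
      proof (cases "b = d")
        case True then show ?thesis using \<open>a = d\<close> by simp
      next
        case False then show ?thesis using True b cd T[of c b] assms(2) by (meson insertE rtrancl_trans)
      qed
    next
      case False
      then have aT: "a \<in> T" using a by auto
      show ?thesis
      proof (cases "b = d")
        case True then show ?thesis using aT cd T[of a c] assms(2) by (meson rtrancl_trans)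
      next
        case False then show ?thesis using aT b T by auto
      qed
    qed
  qed simp
qed

lemma noncut:
  assumes "finite S" "\<forall>a b. E a b \<longrightarrow> E b a"
  shows "T \<subseteq> S \<Longrightarrow> connected_in E T \<Longrightarrow> connected_in E S \<Longrightarrow> T \<noteq> S \<Longrightarrow>
     \<exists>w\<in>S - T. connected_in E (S - {w})"
proof (induction "card (S - T)" arbitrary: T rule: less_induct)
  case less
  obtain t where t: "t \<in> T" using less.prems(2) unfolding connected_in_def by auto
  obtain s where s: "s \<in> S" "s \<notin> T" using less.prems(1,4) by auto
  have "(t, s) \<in> (rel_in E S)\<^sup>*" using less.prems(1,3) t s unfolding connected_in_def by auto
  then obtain c d where cd: "(c, d) \<in> rel_in E S" "c \<in> T" "d \<notin> T"
    using edge_out[of t s _ T] t s by blast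
  then have d: "d \<in> S" "E c d" "E d c" using assms(2) unfolding rel_in_def by auto
  have cT: "connected_in E (insert d T)" using conn_insert[OF less.prems(2) cd(2) d(2,3)] .
  show ?case
  proof (cases "insert d T = S")
    case True
    then have "S - {d} = T" using cd(3) by auto
    then show ?thesis using True less.prems(2) cd(3) by auto
  next
    case False
    have "card (S - insert d T) < card (S - T)"
    proof -
      have "S - insert d T = (S - T) - {d}" by auto
      moreover have "d \<in> S - T" using d cd by auto
      ultimately show ?thesis using assms(1) by (metis card_Diff1_less finite_Diff)
    qed
    then obtain w where "w \<in> S - insert d T" "connected_in E (S - {w})"
      using less.hyps[of "insert d T"] less.prems d(1) cT False by auto
    then show ?thesis by auto
  qed
qed




lemma good5D:
  assumes "good5 E S q T ps"
  shows "length ps = 5" "distinct ps" "\<And>p. p \<in> set ps \<Longrightarrow> st E S q p"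
    "\<And>p a. p \<in> set ps \<Longrightarrow> a \<notin> S \<Longrightarrow> p a = None"
    "\<And>i. i < 5 \<Longrightarrow> rstep E T (ps!i) (ps!((i+1) mod 5))"
  using assms unfolding good5_def by blast+

lemma pent_ind:
  assumes sym: "\<forall>a b. E a b \<longrightarrow> E b a" and irr: "\<forall>a. \<not> E a a"
    and xy: "E x y" and yz: "E y z" and xz: "\<not> E x z" and xnz: "x \<noteq> z"
  shows "finite S \<Longrightarrow> {x, y, z} \<subseteq> S \<Longrightarrow> connected_in E S \<Longrightarrow>
     (q = None \<or> (\<exists>w0. q = Some w0 \<and> w0 \<notin> S)) \<Longrightarrow> \<exists>ps. good5 E S q {x, y, z} ps"
proof (induction "card S" arbitrary: S q rule: less_induct)
  case less
  let ?T = "{x, y, z}"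
  have qS: "q \<noteq> Some a" if "a \<in> S" for a using less.prems(4) that by auto
  show ?case
  proof (cases "S = ?T")
    case True
    have "q \<noteq> Some x" "q \<noteq> Some y" "q \<noteq> Some z" using qS less.prems(2) by auto
    from pent_base[OF sym irr xy yz xz xnz this] show ?thesis using True by simp
  next
    case False
    have yx: "E y x" and zy: "E z y" using sym xy yz by blast+
    have cT: "connected_in E ?T"
    proof -
      have "connected_in E (insert x {y})" by (rule conn_insert[OF conn_single]) (use xy yx in auto)
      then have "connected_in E (insert z (insert x {y}))" by (rule conn_insert) (use yz zy in auto)
      moreover have "insert z (insert x {y}) = ?T" by auto
      ultimately show ?thesis by simp
    qed
    obtain w where w: "w \<in> S - ?T" "connected_in E (S - {w})"
      using noncut[OF less.prems(1) sym less.prems(2) cT less.prems(3)] False by blast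
    let ?S = "S - {w}"
    have c1: "card ?S < card S" using w(1) less.prems(1) by (metis DiffD1 card_Diff1_less)
    have c2: "finite ?S" using less.prems(1) by simp
    have c3: "?T \<subseteq> ?S" using less.prems(2) w(1) by auto
    have c4: "Some w = None \<or> (\<exists>w0. Some w = Some w0 \<and> w0 \<notin> ?S)" by simp
    obtain ps where ps: "good5 E ?S (Some w) ?T ps"
      using less.hyps[OF c1 c2 c3 w(2) c4] by blast
    define ps' where "ps' = map (\<lambda>p. p(w := q)) ps"
    have pw: "p w = None" if "p \<in> set ps" for p using good5D(4)[OF ps that, of w] by simp
    have inj: "inj_on (\<lambda>p. p(w := q)) (set ps)"
    proof (rule inj_onI)
      fix p1 p2 assume h: "p1 \<in> set ps" "p2 \<in> set ps" "p1(w := q) = p2(w := q)"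
      show "p1 = p2"
      proof
        fix a show "p1 a = p2 a"
          using h pw[OF h(1)] pw[OF h(2)] by (cases "a = w") (auto dest: fun_cong[of _ _ a])
      qed
    qed
    have "good5 E S q ?T ps'"
      unfolding good5_def
    proof (intro conjI)
      show "length ps' = 5" using good5D(1)[OF ps] unfolding ps'_def by simp
      show "distinct ps'" using good5D(2)[OF ps] inj unfolding ps'_def by (simp add: distinct_map)
      show "\<forall>p\<in>set ps'. st E S q p \<and> (\<forall>a. a \<notin> S \<longrightarrow> p a = None)"
      proof
        fix p' assume "p' \<in> set ps'"
        then obtain p where p: "p \<in> set ps" "p' = p(w := q)" unfolding ps'_def by auto
        have stp: "st E ?S (Some w) p" and outp: "\<forall>a. a \<notin> ?S \<longrightarrow> p a = None"
          using good5D(3,4)[OF ps p(1)] by auto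
        have "st E S q p'"
        proof (rule st.node[of w])
          show "w \<in> S" using w by auto
          show "p' w = q" using p by simp
          have "st E ?S (Some w) p'" using st_cong[OF stp] p(2) by auto
          then show "\<forall>C\<in>comps E (S - {w}). st E C (Some w) p'"
            using comps_connected[OF w(2)] by simp
        qed
        moreover have "\<forall>a. a \<notin> S \<longrightarrow> p' a = None" using outp p(2) w(1) by auto
        ultimately show "st E S q p' \<and> (\<forall>a. a \<notin> S \<longrightarrow> p' a = None)" by blast
      qed
      show "\<forall>i<5. rstep E ?T (ps' ! i) (ps' ! ((i + 1) mod 5))"
      proof (intro allI impI)
        fix i :: nat assume i: "i < 5"
        have len: "length ps = 5" using good5D(1)[OF ps] .
        let ?p = "ps ! i" and ?p2 = "ps ! ((i + 1) mod 5)"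
        have pin: "?p \<in> set ps" using len i by simp
        have "rstep E ?T ?p ?p2" using good5D(5)[OF ps i] .
        then obtain u v where uv: "u \<in> ?T" "v \<in> ?T" "?p v = Some u" "?p2 = rotate E ?p u v"
          unfolding rstep_def by blast
        have outp: "\<forall>a. a \<notin> ?S \<longrightarrow> ?p a = None" using good5D(4)[OF ps pin] by auto
        have rot: "rotate E (?p(w := q)) u v = (rotate E ?p u v)(w := q)"
        proof (rule rotate_upd)
          show "?p w = None" using pw[OF pin] .
          show "w \<noteq> u" "w \<noteq> v" using uv w by auto
          show "q \<noteq> Some v" using qS uv(2) less.prems(2) by auto
          show "\<forall>w0. q = Some w0 \<longrightarrow> ?p w0 = None \<and> w0 \<noteq> w"
            using less.prems(4) outp w(1) by auto
        qed
        have e1: "ps' ! i = ?p(w := q)" using len i unfolding ps'_def by simp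
        have e2: "ps' ! ((i + 1) mod 5) = ?p2(w := q)" using len unfolding ps'_def by simp
        have vw: "v \<noteq> w" using uv(2) w(1) by auto
        have a1: "(?p(w := q)) v = Some u" using uv(3) vw by simp
        have a2: "?p2(w := q) = rotate E (?p(w := q)) u v" using rot uv(4) by simp
        show "rstep E ?T (ps' ! i) (ps' ! ((i + 1) mod 5))"
          unfolding rstep_def e1 e2 using a1 a2 uv(1,2) by blast
      qed
    qed
    then show ?thesis by blast
  qed
qed




lemma p3_exists:
  assumes "simple_graph V E" "connected_in E V" "\<not> complete_graph V E"
  shows "\<exists>x y z. E x y \<and> E y z \<and> \<not> E x z \<and> x \<noteq> z"
proof -
  obtain a b where ab: "a \<in> V" "b \<in> V" "a \<noteq> b" "\<not> E a b"
    using assms(3) unfolding complete_graph_def by auto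
  have path: "(a, b) \<in> (rel_in E V)\<^sup>*" using assms(2) ab unfolding connected_in_def by auto
  have "\<And>b. (a, b) \<in> (rel_in E V)\<^sup>* \<Longrightarrow> a \<noteq> b \<Longrightarrow> \<not> E a b \<Longrightarrow>
      \<exists>x y z. E x y \<and> E y z \<and> \<not> E x z \<and> x \<noteq> z"
  proof -
    fix b assume "(a, b) \<in> (rel_in E V)\<^sup>*"
    then show "a \<noteq> b \<Longrightarrow> \<not> E a b \<Longrightarrow> \<exists>x y z. E x y \<and> E y z \<and> \<not> E x z \<and> x \<noteq> z"
    proof (induction rule: rtrancl_induct)
      case base then show ?case by simp
    next
      case (step c d)
      have cd: "E c d" using step(2) unfolding rel_in_def by auto
      show ?case
      proof (cases "c = a")
        case True then show ?thesis using cd step.prems by simp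
      next
        case False
        show ?thesis
        proof (cases "E a c")
          case True then show ?thesis using cd step.prems by blast
        next
          case False then show ?thesis using step.IH \<open>c \<noteq> a\<close> by blast
        qed
      qed
    qed
  qed
  then show ?thesis using path ab by blast
qed

lemma noncomplete_cycle:
  assumes g: "simple_graph V E" and c: "connected_in E V" and nc: "\<not> complete_graph V E"
  shows "has_cycle (rot_vertices V E) (rot_adj E) 5"
proof -
  obtain x y z where xyz: "E x y" "E y z" "\<not> E x z" "x \<noteq> z" using p3_exists[OF g c nc] by blast
  have sym: "\<forall>a b. E a b \<longrightarrow> E b a" and irr: "\<forall>a. \<not> E a a" and fin: "finite V"
    and inV: "\<forall>a b. E a b \<longrightarrow> a \<in> V \<and> b \<in> V"
    using g unfolding simple_graph_def by auto
  have T: "{x, y, z} \<subseteq> V" using inV xyz by auto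
  obtain ps where ps: "good5 E V None {x, y, z} ps"
    using pent_ind[OF sym irr xyz fin T c] by blast
  show ?thesis unfolding has_cycle_def
  proof (intro exI conjI)
    show "length ps = 5" "distinct ps" using good5D(1,2)[OF ps] .
    show "set ps \<subseteq> rot_vertices V E"
      unfolding rot_vertices_def search_tree_def using good5D(3,4)[OF ps] by blast
    show "\<forall>i<5. rot_adj E (ps ! i) (ps ! ((i + 1) mod 5))"
    proof (intro allI impI)
      fix i :: nat assume i: "i < 5"
      have ne: "ps ! i \<noteq> ps ! ((i + 1) mod 5)"
      proof
        assume "ps ! i = ps ! ((i + 1) mod 5)"
        then have "i = (i + 1) mod 5"
          using nth_eq_iff_index_eq[OF good5D(2)[OF ps]] good5D(1)[OF ps] i by simp
        then show False using i by presburger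
      qed
      have "rstep E {x, y, z} (ps ! i) (ps ! ((i + 1) mod 5))" using good5D(5)[OF ps i] .
      then have "rotation_step E (ps ! i) (ps ! ((i + 1) mod 5))"
        unfolding rstep_def rotation_step_def by blast
      then show "rot_adj E (ps ! i) (ps ! ((i + 1) mod 5))" unfolding rot_adj_def using ne by blast
    qed
  qed
qed

lemma no2col:
  assumes "has_cycle X R 5" "\<forall>x\<in>X. c x < (2::nat)" "\<forall>x\<in>X. \<forall>y\<in>X. R x y \<longrightarrow> c x \<noteq> c y"
  shows False
proof -
  obtain xs where xs: "length xs = 5" "set xs \<subseteq> X" "\<forall>i<5. R (xs ! i) (xs ! ((i + 1) mod 5))"
    using assms(1) unfolding has_cycle_def by blast
  have inX: "xs ! i \<in> X" if "i < 5" for i using xs(1,2) that by auto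
  have d: "c (xs ! i) \<noteq> c (xs ! ((i + 1) mod 5))" if "i < 5" for i
    using assms(3) xs(3) inX that by (meson mod_less_divisor zero_less_numeral)
  have l: "c (xs ! i) < 2" if "i < 5" for i using assms(2) inX that by blast
  have "c (xs ! 0) \<noteq> c (xs ! 1)" "c (xs ! 1) \<noteq> c (xs ! 2)" "c (xs ! 2) \<noteq> c (xs ! 3)"
    "c (xs ! 3) \<noteq> c (xs ! 4)" "c (xs ! 4) \<noteq> c (xs ! 0)"
  proof -
    have m: "(0+1) mod 5 = (1::nat)" "(1+1) mod 5 = (2::nat)" "(2+1) mod 5 = (3::nat)"
      "(3+1) mod 5 = (4::nat)" "(4+1) mod 5 = (0::nat)" by simp_all
    show "c (xs ! 0) \<noteq> c (xs ! 1)" using d[of 0, unfolded m] by simp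
    show "c (xs ! 1) \<noteq> c (xs ! 2)" using d[of 1, unfolded m] by simp
    show "c (xs ! 2) \<noteq> c (xs ! 3)" using d[of 2, unfolded m] by simp
    show "c (xs ! 3) \<noteq> c (xs ! 4)" using d[of 3, unfolded m] by simp
    show "c (xs ! 4) \<noteq> c (xs ! 0)" using d[of 4, unfolded m] by simp
  qed
  moreover have "c (xs ! 0) < 2" "c (xs ! 1) < 2" "c (xs ! 2) < 2" "c (xs ! 3) < 2" "c (xs ! 4) < 2"
    using l by simp_all
  ultimately show False by linarith
qed

lemma rot_finite:
  assumes "simple_graph V E"
  shows "finite (rot_vertices V E)"
proof -
  have fin: "finite V" using assms unfolding simple_graph_def by auto
  have "rot_vertices V E \<subseteq> {f. \<forall>x. (x \<in> V \<longrightarrow> f x \<in> insert None (Some ` V)) \<and> (x \<notin> V \<longrightarrow> f x = None)}"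
  proof
    fix p assume "p \<in> rot_vertices V E"
    then have "st E V None p" "\<forall>x. x \<notin> V \<longrightarrow> p x = None"
      unfolding rot_vertices_def search_tree_def by auto
    with st_vals[OF this(1)] show "p \<in> {f. \<forall>x. (x \<in> V \<longrightarrow> f x \<in> insert None (Some ` V)) \<and> (x \<notin> V \<longrightarrow> f x = None)}"
      by auto
  qed
  moreover have "finite {f. \<forall>x. (x \<in> V \<longrightarrow> f x \<in> insert None (Some ` V)) \<and> (x \<notin> V \<longrightarrow> f x = None)}"
    by (rule finite_set_of_finite_funs) (use fin in auto)
  ultimately show ?thesis by (rule finite_subset)
qed

lemma col_exists:
  assumes "finite X" "\<forall>x. \<not> R x x"
  shows "\<exists>k c. (\<forall>x\<in>X. c x < (k::nat)) \<and> (\<forall>x\<in>X. \<forall>y\<in>X. R x y \<longrightarrow> c x \<noteq> c y)"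
proof -
  obtain f n where f: "f ` X = {i::nat. i < n}" "inj_on f X" using finite_imp_inj_to_nat_seg[OF assms(1)] by blast
  have "\<forall>x\<in>X. f x < n" using f(1) by auto
  moreover have "\<forall>x\<in>X. \<forall>y\<in>X. R x y \<longrightarrow> f x \<noteq> f y" using f(2) assms(2) by (metis inj_on_eq_iff)
  ultimately show ?thesis by blast
qed

lemma noncomplete_chrom:
  assumes g: "simple_graph V E" and c: "connected_in E V" and nc: "\<not> complete_graph V E"
  shows "chromatic_number (rot_vertices V E) (rot_adj E) \<noteq> 2"
proof
  let ?P = "\<lambda>k. \<exists>c :: ('a \<Rightarrow> 'a option) \<Rightarrow> nat. (\<forall>x\<in>rot_vertices V E. c x < k) \<and>
      (\<forall>x\<in>rot_vertices V E. \<forall>y\<in>rot_vertices V E. rot_adj E x y \<longrightarrow> c x \<noteq> c y)"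
  assume h: "chromatic_number (rot_vertices V E) (rot_adj E) = 2"
  have "\<exists>k. ?P k" using col_exists[OF rot_finite[OF g], of "rot_adj E"] unfolding rot_adj_def by blast
  then have "?P (LEAST k. ?P k)" by (rule LeastI_ex)
  then have "?P 2" using h unfolding chromatic_number_def by simp
  then show False using no2col[OF noncomplete_cycle[OF g c nc]] by blast
qed




fun chainp :: "'a option \<Rightarrow> 'a list \<Rightarrow> 'a \<Rightarrow> 'a option" where
  "chainp q [] = (\<lambda>_. None)"
| "chainp q (a # xs) = (chainp (Some a) xs)(a := q)"

lemma chainp_out: "a \<notin> set xs \<Longrightarrow> chainp q xs a = None"
  by (induction xs arbitrary: q) auto

lemma chainp_nth: "distinct xs \<Longrightarrow> j < length xs \<Longrightarrow>
   chainp q xs (xs ! j) = (if j = 0 then q else Some (xs ! (j - 1)))"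
proof (induction xs arbitrary: q j)
  case Nil then show ?case by simp
next
  case (Cons a xs)
  show ?case
  proof (cases j)
    case 0 then show ?thesis by simp
  next
    case (Suc i)
    then have i: "i < length xs" using Cons.prems by simp
    have "xs ! i \<noteq> a" using Cons.prems(1) i by (metis distinct.simps(2) nth_mem)
    then have "chainp q (a # xs) ((a # xs) ! j) = chainp (Some a) xs (xs ! i)" using Suc by simp
    also have "\<dots> = (if i = 0 then Some a else Some (xs ! (i - 1)))" using Cons.IH[of i "Some a"] Cons.prems i by simp
    also have "\<dots> = Some ((a # xs) ! (j - 1))" using Suc by (cases i) auto
    finally show ?thesis using Suc by simp
  qed
qed

lemma complete_conn:
  assumes "complete_graph V E" "S \<subseteq> V" "S \<noteq> {}"
  shows "connected_in E S"
  unfolding connected_in_def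
proof (intro conjI ballI)
  fix a b assume "a \<in> S" "b \<in> S"
  then show "(a, b) \<in> (rel_in E S)\<^sup>*"
    using assms unfolding complete_graph_def rel_in_def
    by (cases "a = b") (auto intro: r_into_rtrancl)
qed (use assms in auto)

lemma chain_st:
  assumes "complete_graph V E"
  shows "distinct xs \<Longrightarrow> set xs \<subseteq> V \<Longrightarrow> xs \<noteq> [] \<Longrightarrow> st E (set xs) q (chainp q xs)"
proof (induction xs arbitrary: q)
  case Nil then show ?case by simp
next
  case (Cons a ys)
  show ?case
  proof (rule st.node[of a])
    show "a \<in> set (a # ys)" by simp
    show "chainp q (a # ys) a = q" by simp
    have e: "set (a # ys) - {a} = set ys" using Cons.prems by auto
    show "\<forall>C\<in>comps E (set (a # ys) - {a}). st E C (Some a) (chainp q (a # ys))"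
    proof (cases "ys = []")
      case True then show ?thesis using e by (simp add: comps_empty)
    next
      case False
      have "connected_in E (set ys)" using complete_conn[OF assms] Cons.prems False by auto
      then have c: "comps E (set (a # ys) - {a}) = {set ys}" using e comps_connected by metis
      have "st E (set ys) (Some a) (chainp (Some a) ys)" using Cons.IH Cons.prems False by auto
      moreover have "\<forall>b\<in>set ys. chainp (Some a) ys b = chainp q (a # ys) b" using Cons.prems by auto
      ultimately have "st E (set ys) (Some a) (chainp q (a # ys))" by (rule st_cong)
      then show ?thesis using c by simp
    qed
  qed
qed

lemma st_chain:
  assumes "complete_graph V E"
  shows "st E S q p \<Longrightarrow> S \<subseteq> V \<Longrightarrow> \<exists>xs. distinct xs \<and> set xs = S \<and> (\<forall>a\<in>S. p a = chainp q xs a)"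
proof (induction rule: st.induct)
  case (node r S p q)
  show ?case
  proof (cases "S - {r} = {}")
    case True
    then have "S = {r}" using node(1) by auto
    then show ?thesis using node(2) by (intro exI[of _ "[r]"]) auto
  next
    case False
    have "connected_in E (S - {r})" using complete_conn[OF assms, of "S - {r}"] node(4) False by blast
    then have c: "comps E (S - {r}) = {S - {r}}" by (rule comps_connected)
    then obtain ys where ys: "distinct ys" "set ys = S - {r}" "\<forall>a\<in>S - {r}. p a = chainp (Some r) ys a"
      using node(3) node(4) by auto
    show ?thesis
    proof (intro exI[of _ "r # ys"] conjI)
      show "distinct (r # ys)" using ys by auto
      show "set (r # ys) = S" using ys node(1) by auto
      show "\<forall>a\<in>S. p a = chainp q (r # ys) a" using ys node(2) by auto
    qed
  qed
qed

lemma chainp_unique: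
  assumes "distinct xs" "distinct ys" "set xs = set ys" "chainp None xs = chainp None ys"
  shows "xs = ys"
proof -
  have len: "length xs = length ys" using assms by (metis distinct_card)
  have "\<forall>i. i < length xs \<longrightarrow> xs ! i = ys ! i"
  proof (intro allI)
    fix i show "i < length xs \<longrightarrow> xs ! i = ys ! i"
    proof (induction i)
      case 0
      show ?case
      proof
        assume i: "0 < length xs"
        have "ys ! 0 \<in> set xs" using assms(3) len i by simp
        then obtain j where j: "j < length xs" "xs ! j = ys ! 0" by (metis in_set_conv_nth)
        have "chainp None xs (xs ! j) = None" using j(2) assms(4) chainp_nth[OF assms(2), of 0 None] len i by simp
        then have "j = 0" using chainp_nth[OF assms(1) j(1), of None] by (cases "j = 0") auto
        then show "xs ! 0 = ys ! 0" using j by simp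
      qed
    next
      case (Suc i)
      show ?case
      proof
        assume i: "Suc i < length xs"
        then have IH: "xs ! i = ys ! i" using Suc.IH by simp
        have "ys ! Suc i \<in> set xs" using assms(3) len i by simp
        then obtain j where j: "j < length xs" "xs ! j = ys ! Suc i" by (metis in_set_conv_nth)
        have "chainp None xs (xs ! j) = Some (xs ! i)"
          using j(2) assms(4) chainp_nth[OF assms(2), of "Suc i" None] len i IH by simp
        then have "j \<noteq> 0" "xs ! (j - 1) = xs ! i" using chainp_nth[OF assms(1) j(1), of None]
          by (cases "j = 0"; simp)+
        then have "j - 1 = i" using nth_eq_iff_index_eq[OF assms(1)] j(1) i by simp
        then have "j = Suc i" using \<open>j \<noteq> 0\<close> by simp
        then show "xs ! Suc i = ys ! Suc i" using j by simp
      qed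
    qed
  qed
  then show ?thesis using len by (simp add: nth_equalityI)
qed




lemma chain_rotate:
  assumes comp: "complete_graph V E" and d: "distinct xs" and sV: "set xs \<subseteq> V"
    and uv: "chainp None xs v = Some u"
  shows "\<exists>A B. xs = A @ u # v # B \<and> rotate E (chainp None xs) u v = chainp None (A @ v # u # B)"
proof -
  let ?p = "chainp None xs"
  have "v \<in> set xs" using uv chainp_out by fastforce
  then obtain j where j: "j < length xs" "xs ! j = v" by (metis in_set_conv_nth)
  have "j \<noteq> 0" using uv chainp_nth[OF d j(1), of None] j(2) by (auto split: if_splits)
  then obtain k where k: "j = Suc k" by (cases j) auto
  have xk: "xs ! k = u" using uv chainp_nth[OF d j(1), of None] j(2) k by simp
  have kl: "Suc k < length xs" using j k by simp
  define A where "A = take k xs"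
  define B where "B = drop (Suc (Suc k)) xs"
  have lenA: "length A = k" using kl unfolding A_def by simp
  have xsd: "xs = A @ u # v # B"
  proof -
    have "drop k xs = xs ! k # drop (Suc k) xs" using kl by (simp add: Cons_nth_drop_Suc)
    moreover have "drop (Suc k) xs = xs ! Suc k # drop (Suc (Suc k)) xs" using kl by (simp add: Cons_nth_drop_Suc)
    ultimately show ?thesis unfolding A_def B_def using xk j k by (metis append_take_drop_id)
  qed
  define ys where "ys = A @ v # u # B"
  have ysu: "ys = xs[k := v, Suc k := u]" unfolding ys_def xsd using lenA
    by (simp add: list_update_append)
  have leny: "length ys = length xs" unfolding ysu by simp
  have ysn: "ys ! i = (if i = k then v else if i = Suc k then u else xs ! i)" if "i < length xs" for i
    unfolding ysu using that kl by (auto simp: nth_list_update)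
  have dy: "distinct ys" using d unfolding ys_def xsd by auto
  have sety: "set ys = set xs" unfolding ys_def xsd by auto
  have uneqv: "u \<noteq> v" using d xsd by auto
  have "rotate E ?p u v = chainp None ys"
  proof
    fix a
    show "rotate E ?p u v a = chainp None ys a"
    proof (cases "a \<in> set xs")
      case False
      then have "a \<noteq> u" "a \<noteq> v" "?p a = None" using xsd chainp_out[OF False] by auto
      moreover have "chainp None ys a = None" using False sety chainp_out by metis
      ultimately show ?thesis unfolding rotate_def by simp
    next
      case True
      then obtain i where i: "i < length xs" "xs ! i = a" by (metis in_set_conv_nth)
      have pa: "?p a = (if i = 0 then None else Some (xs ! (i - 1)))" using chainp_nth[OF d i(1)] i(2) by simp
      show ?thesis
      proof (cases "i = k")
        case True
        then have au: "a = u" using i xk by simp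
        have "chainp None ys (ys ! Suc k) = Some (ys ! k)" using chainp_nth[OF dy, of "Suc k" None] leny kl by simp
        then have "chainp None ys u = Some v" using ysn[of k] ysn[of "Suc k"] kl by simp
        then show ?thesis unfolding rotate_def au by simp
      next
        case False
        note ik = False
        show ?thesis
        proof (cases "i = Suc k")
          case True
          then have av: "a = v" using i j k by simp
          have "chainp None ys (ys ! k) = (if k = 0 then None else Some (ys ! (k - 1)))"
            using chainp_nth[OF dy, of k None] leny kl by simp
          moreover have "ys ! k = v" using ysn[of k] kl by simp
          moreover have "k \<noteq> 0 \<Longrightarrow> ys ! (k - 1) = xs ! (k - 1)"
          proof -
            assume "k \<noteq> 0"
            then obtain k' where k': "k = Suc k'" by (cases k) auto
            then show ?thesis using ysn[of k'] kl by simp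
          qed
          moreover have "?p u = (if k = 0 then None else Some (xs ! (k - 1)))"
            using chainp_nth[OF d, of k None] kl xk by simp
          ultimately show ?thesis unfolding rotate_def av using uneqv by auto
        next
          case False
          have au: "a \<noteq> u" "a \<noteq> v" using i ik False xk j k nth_eq_iff_index_eq[OF d] kl by auto
          have ya: "ys ! i = a" using ysn[OF i(1)] ik False i(2) by simp
          have rhs: "chainp None ys a = (if i = 0 then None else Some (ys ! (i - 1)))"
            using chainp_nth[OF dy, of i None] leny i(1) ya by simp
          show ?thesis
          proof (cases "i = Suc (Suc k)")
            case True
            have pav: "?p a = Some v" using pa True j k by simp
            have "a \<in> subtree ?p a" unfolding subtree_def by simp
            moreover have "E u a" using comp sV au xsd True i unfolding complete_graph_def
              by (metis in_set_conv_nth nth_mem subsetD xk kl Suc_lessD)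
            ultimately have "\<exists>y\<in>subtree ?p a. E u y" by blast
            then have "rotate E ?p u v a = Some u" unfolding rotate_def using au pav by simp
            moreover have "chainp None ys a = Some u" using rhs True ysn[of "Suc k"] kl by simp
            ultimately show ?thesis by simp
          next
            case False
            have "?p a \<noteq> Some v"
            proof
              assume "?p a = Some v"
              then have "i \<noteq> 0" "xs ! (i - 1) = xs ! Suc k" using pa j k by (auto split: if_splits)
              then have "i - 1 = Suc k" using nth_eq_iff_index_eq[OF d] i(1) kl by simp
              then show False using False \<open>i \<noteq> 0\<close> by simp
            qed
            then have "rotate E ?p u v a = ?p a" unfolding rotate_def using au by simp
            moreover have "i \<noteq> 0 \<Longrightarrow> ys ! (i - 1) = xs ! (i - 1)"
              using ysn[of "i - 1"] i(1) ik False \<open>i \<noteq> Suc k\<close> by auto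
            ultimately show ?thesis using rhs pa by simp
          qed
        qed
      qed
    qed
  qed
  then show ?thesis using xsd unfolding ys_def by blast
qed

fun invc :: "('a \<Rightarrow> nat) \<Rightarrow> 'a list \<Rightarrow> nat" where
  "invc f [] = 0"
| "invc f (a # xs) = length (filter (\<lambda>b. f b < f a) xs) + invc f xs"

lemma invc_swap: "f u \<noteq> f v \<Longrightarrow> odd (invc f (A @ u # v # B) + invc f (A @ v # u # B))"
proof (induction A)
  case Nil
  have "invc f (u # v # B) + invc f (v # u # B) =
     (if f v < f u then 1 else 0) + (if f u < f v then 1 else 0) + 2 * (length (filter (\<lambda>b. f b < f u) B)
       + length (filter (\<lambda>b. f b < f v) B) + invc f B)" by simp
  then show ?case using Nil by auto
next
  case (Cons a A)
  have "length (filter (\<lambda>b. f b < f a) (A @ u # v # B)) = length (filter (\<lambda>b. f b < f a) (A @ v # u # B))"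
    by simp
  then show ?case using Cons by simp
qed




definition colr :: "'a set \<Rightarrow> ('a \<Rightarrow> nat) \<Rightarrow> ('a \<Rightarrow> 'a option) \<Rightarrow> nat" where
  "colr V f p = invc f (SOME xs. distinct xs \<and> set xs = V \<and> p = chainp None xs) mod 2"

lemma colr_eq: "distinct xs \<Longrightarrow> set xs = V \<Longrightarrow> p = chainp None xs \<Longrightarrow> colr V f p = invc f xs mod 2"
proof -
  assume h: "distinct xs" "set xs = V" "p = chainp None xs"
  let ?P = "\<lambda>xs. distinct xs \<and> set xs = V \<and> p = chainp None xs"
  have "?P (SOME xs. ?P xs)" using h by (intro someI[of ?P xs]) auto
  then have "(SOME xs. ?P xs) = xs" using chainp_unique[of "SOME xs. ?P xs" xs] h by auto
  then show ?thesis unfolding colr_def by simp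
qed

lemma rv_chain:
  assumes "simple_graph V E" "complete_graph V E" "p \<in> rot_vertices V E"
  shows "\<exists>xs. distinct xs \<and> set xs = V \<and> p = chainp None xs"
proof -
  have "st E V None p" "\<forall>a. a \<notin> V \<longrightarrow> p a = None"
    using assms(3) unfolding rot_vertices_def search_tree_def by auto
  moreover obtain xs where xs: "distinct xs" "set xs = V" "\<forall>a\<in>V. p a = chainp None xs a"
    using st_chain[OF assms(2) calculation(1)] by blast
  ultimately have "p = chainp None xs" using chainp_out[of _ xs None] by (metis ext)
  then show ?thesis using xs by blast
qed

lemma chain_rv:
  assumes "complete_graph V E" "distinct xs" "set xs = V" "xs \<noteq> []"
  shows "chainp None xs \<in> rot_vertices V E"
  unfolding rot_vertices_def search_tree_def
  using chain_st[OF assms(1) assms(2) _ assms(4), of None] assms(3) chainp_out[of _ xs None] by auto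

lemma colr_step:
  assumes g: "simple_graph V E" and c: "complete_graph V E" and p: "p \<in> rot_vertices V E"
    and r: "rotation_step E p p'" and f: "inj_on f V"
  shows "colr V f p \<noteq> colr V f p'"
proof -
  obtain xs where xs: "distinct xs" "set xs = V" "p = chainp None xs" using rv_chain[OF g c p] by blast
  obtain u v where uv: "p v = Some u" "p' = rotate E p u v" using r unfolding rotation_step_def by blast
  obtain A B where AB: "xs = A @ u # v # B" "rotate E (chainp None xs) u v = chainp None (A @ v # u # B)"
    using chain_rotate[OF c xs(1) _, of v u] xs uv by auto
  have dy: "distinct (A @ v # u # B)" using xs(1) AB(1) by auto
  have sy: "set (A @ v # u # B) = V" using xs(2) AB(1) by auto
  have "f u \<noteq> f v" using f xs AB(1) by (auto dest: inj_onD)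
  then have "odd (invc f xs + invc f (A @ v # u # B))" using invc_swap AB(1) by metis
  moreover have "colr V f p = invc f xs mod 2" using colr_eq xs by blast
  moreover have "colr V f p' = invc f (A @ v # u # B) mod 2"
    using colr_eq[OF dy sy] uv(2) AB(2) xs(3) by simp
  moreover have "\<forall>a b::nat. odd (a + b) \<longrightarrow> a mod 2 \<noteq> b mod 2" by presburger
  ultimately show ?thesis by metis
qed

lemma complete_part:
  assumes g: "simple_graph V E" and c: "complete_graph V E" and card: "card V \<ge> 3"
  shows "chromatic_number (rot_vertices V E) (rot_adj E) = 2 \<and> \<not> has_cycle (rot_vertices V E) (rot_adj E) 5"
proof -
  have fin: "finite V" using g unfolding simple_graph_def by auto
  obtain f n where f: "f ` V = {i::nat. i < n}" "inj_on f V" using finite_imp_inj_to_nat_seg[OF fin] by blast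
  let ?X = "rot_vertices V E"
  have proper: "\<forall>x\<in>?X. \<forall>y\<in>?X. rot_adj E x y \<longrightarrow> colr V f x \<noteq> colr V f y"
  proof (intro ballI impI)
    fix x y assume xy: "x \<in> ?X" "y \<in> ?X" "rot_adj E x y"
    then have "rotation_step E x y \<or> rotation_step E y x" unfolding rot_adj_def by blast
    then show "colr V f x \<noteq> colr V f y"
      using colr_step[OF g c _ _ f(2)] xy by metis
  qed
  have lt: "\<forall>x\<in>?X. colr V f x < 2" unfolding colr_def by simp
  obtain xs where xs: "set xs = V" "distinct xs" using finite_distinct_list[OF fin] by blast
  have len: "length xs \<ge> 3" using card xs distinct_card by metis
  have ne: "xs \<noteq> []" using len by auto
  let ?p0 = "chainp None xs"
  have p0: "?p0 \<in> ?X" using chain_rv[OF c xs(2) xs(1) ne] .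
  have e: "?p0 (xs ! 1) = Some (xs ! 0)" using chainp_nth[OF xs(2), of 1 None] len by simp
  define a where "a = xs ! 0"
  define b where "b = xs ! 1"
  have e': "?p0 b = Some a" using e unfolding a_def b_def .
  obtain A B where AB: "xs = A @ a # b # B"
    "rotate E ?p0 a b = chainp None (A @ b # a # B)"
    using chain_rotate[OF c xs(2) _ e'] xs(1) by auto
  let ?p1 = "rotate E ?p0 a b"
  have d1: "distinct (A @ b # a # B)" using xs(2) AB(1) by auto
  have s1: "set (A @ b # a # B) = V" using xs(1) AB(1) by auto
  have p1: "?p1 \<in> ?X" unfolding AB(2) by (rule chain_rv[OF c d1 s1]) simp
  have rs: "rotation_step E ?p0 ?p1" unfolding rotation_step_def using e' by blast
  have cne: "colr V f ?p0 \<noteq> colr V f ?p1" using colr_step[OF g c p0 rs f(2)] .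
  then have adj: "rot_adj E ?p0 ?p1" unfolding rot_adj_def using rs by auto
  let ?P = "\<lambda>k. \<exists>c :: ('a \<Rightarrow> 'a option) \<Rightarrow> nat. (\<forall>x\<in>?X. c x < k) \<and>
      (\<forall>x\<in>?X. \<forall>y\<in>?X. rot_adj E x y \<longrightarrow> c x \<noteq> c y)"
  have P2: "?P 2" using lt proper by blast
  have "(LEAST k. ?P k) = 2"
  proof (rule Least_equality)
    show "?P 2" by (rule P2)
    fix k assume "?P k"
    then obtain cc :: "('a \<Rightarrow> 'a option) \<Rightarrow> nat" where cc: "\<forall>x\<in>?X. cc x < k"
      "\<forall>x\<in>?X. \<forall>y\<in>?X. rot_adj E x y \<longrightarrow> cc x \<noteq> cc y" by blast
    have "cc ?p0 \<noteq> cc ?p1" using cc(2) p0 p1 adj by blast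
    moreover have "cc ?p0 < k" "cc ?p1 < k" using cc(1) p0 p1 by blast+
    ultimately show "2 \<le> k" by linarith
  qed
  then have "chromatic_number ?X (rot_adj E) = 2" unfolding chromatic_number_def .
  moreover have "\<not> has_cycle ?X (rot_adj E) 5" using no2col[of ?X "rot_adj E" "colr V f"] lt proper by blast
  ultimately show ?thesis by blast
qed



theorem lemma3p1:
  fixes V :: "'a set" and E :: "'a \<Rightarrow> 'a \<Rightarrow> bool"
  assumes "simple_graph V E" and "connected_in E V" and "card V \<ge> 3"
  shows "(complete_graph V E \<longleftrightarrow> chromatic_number (rot_vertices V E) (rot_adj E) = 2)
       \<and> (chromatic_number (rot_vertices V E) (rot_adj E) = 2
            \<longleftrightarrow> \<not> has_cycle (rot_vertices V E) (rot_adj E) 5)"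
proof (cases "complete_graph V E")
  case True
  then show ?thesis using complete_part[OF assms(1) True assms(3)] by blast
next
  case False
  then show ?thesis using noncomplete_chrom[OF assms(1,2) False] noncomplete_cycle[OF assms(1,2) False] by blast
qed

end
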